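(* Let $N \ge M \ge 1$ be integers, let $\mathcal{U}_r=\{r_1,\dots,r_N\}$ (robots) and $\mathcal{U}_g=\{g_1,\dots,g_M\}$ (goals), and let $\mathcal{F}=\{(i,j): i\in\{1,\dots,N\},\ j\in\{1,\dots,M\}\}$ be the edge set of the complete bipartite graph between them. For each edge $(i,j)\in\mathcal{F}$ let $C_{ij}$ be a real-valued integrable random variable (all defined on a common probability space, with arbitrary joint distribution). Let $\mathcal{O}\subset\mathcal{F}$ be an initial assignment such that every goal $j$ has exactly one $i$ with $(i,j)\in\mathcal{O}$, and every robot $i$ has at most one $j$ with $(i,j)\in\mathcal{O}$. Put $\mathcal{F}_{\mathcal{O}}=\mathcal{F}\setminus\mathcal{O}$ and define, for $\mathcal{A}\subseteq\mathcal{F}_{\mathcal{O}}$, $$J_{\mathcal{O}}(\mathcal{A})=\frac{1}{M}\sum_{j=1}^{M}\mathbb{E}\Big[\min\{C_{kj} : (k,j)\in\mathcal{A}\cup\mathcal{O}\}\Big].$$ Then $J_{\mathcal{O}}:2^{\mathcal{F}_{\mathcal{O}}}\to\mathbb{R}$ is monotone non-increasing and supermodular.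
   Context: A set function $J:2^{\mathcal{F}_{\mathcal{O}}}\to\mathbb{R}$ is monotone non-increasing if $J(\mathcal{A})\ge J(\mathcal{B})$ whenever $\mathcal{A}\subseteq\mathcal{B}\subseteq\mathcal{F}_{\mathcal{O}}$. The marginal decrease of $J$ at $\mathcal{A}$ with respect to $x\notin\mathcal{A}$ is $\Delta_J(x\mid\mathcal{A})=J(\mathcal{A})-J(\mathcal{A}\cup\{x\})$. $J$ is supermodular if for all $\mathcal{A}\subseteq\mathcal{B}\subseteq\mathcal{F}_{\mathcal{O}}$ and all $x\in\mathcal{F}_{\mathcal{O}}\setminus\mathcal{B}$ one has $\Delta_J(x\mid\mathcal{A})\ge\Delta_J(x\mid\mathcal{B})$. The quantity $\min\{C_{kj}:(k,j)\in\mathcal{A}\cup\mathcal{O}\}$ is the effective waiting time at goal $j$ (only the first-arriving robot serves the goal). *)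

theory Defs
  imports "HOL-Probability.Probability"
begin

definition edges :: "nat \<Rightarrow> nat \<Rightarrow> (nat \<times> nat) set" where
  "edges N M = {1..N} \<times> {1..M}"

definition valid_assignment :: "nat \<Rightarrow> nat \<Rightarrow> (nat \<times> nat) set \<Rightarrow> bool" where
  "valid_assignment N M Asg \<longleftrightarrow> Asg \<subseteq> edges N M \<and>
     (\<forall>j\<in>{1..M}. \<exists>!i. (i, j) \<in> Asg) \<and>
     (\<forall>i\<in>{1..N}. \<forall>j1 j2. (i, j1) \<in> Asg \<longrightarrow> (i, j2) \<in> Asg \<longrightarrow> j1 = j2)"

definition eff_wait :: "(nat \<Rightarrow> nat \<Rightarrow> 'a \<Rightarrow> real) \<Rightarrow> (nat \<times> nat) set \<Rightarrow> nat \<Rightarrow> 'a \<Rightarrow> real" where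
  "eff_wait C E j \<omega> = Min {C k j \<omega> | k. (k, j) \<in> E}"

definition J_O :: "'a measure \<Rightarrow> nat \<Rightarrow> (nat \<Rightarrow> nat \<Rightarrow> 'a \<Rightarrow> real) \<Rightarrow> (nat \<times> nat) set
    \<Rightarrow> (nat \<times> nat) set \<Rightarrow> real" where
  "J_O P M C Asg A = (1 / real M) * (\<Sum>j=1..M. integral\<^sup>L P (eff_wait C (A \<union> Asg) j))"

definition monotone_nonincreasing_on :: "'b set \<Rightarrow> ('b set \<Rightarrow> real) \<Rightarrow> bool" where
  "monotone_nonincreasing_on V J \<longleftrightarrow> (\<forall>A B. A \<subseteq> B \<and> B \<subseteq> V \<longrightarrow> J A \<ge> J B)"

definition marginal_decrease :: "('b set \<Rightarrow> real) \<Rightarrow> 'b \<Rightarrow> 'b set \<Rightarrow> real" where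
  "marginal_decrease J x A = J A - J (A \<union> {x})"

definition supermodular_on :: "'b set \<Rightarrow> ('b set \<Rightarrow> real) \<Rightarrow> bool" where
  "supermodular_on V J \<longleftrightarrow> (\<forall>A B x. A \<subseteq> B \<and> B \<subseteq> V \<and> x \<in> V - B \<longrightarrow>
      marginal_decrease J x A \<ge> marginal_decrease J x B)"

end

theory Submission
  imports Defs
begin

lemma ew_set: "{C k j \<omega> | k. (k, j) \<in> E} = (\<lambda>k. C k j \<omega>) ` {k. (k,j) \<in> E}"
  by auto

lemma integrable_Min_img:
  fixes f :: "nat \<Rightarrow> 'a \<Rightarrow> real"
  assumes "finite K" "K \<noteq> {}" "\<forall>k\<in>K. integrable P (f k)"
  shows "integrable P (\<lambda>\<omega>. Min ((\<lambda>k. f k \<omega>) ` K))"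
  using assms
proof (induction K rule: finite_ne_induct)
  case (singleton x) then show ?case by simp
next
  case (insert x F)
  have "(\<lambda>\<omega>. Min ((\<lambda>k. f k \<omega>) ` insert x F)) = (\<lambda>\<omega>. min (f x \<omega>) (Min ((\<lambda>k. f k \<omega>) ` F)))"
    using insert by (auto simp: Min_insert)
  then show ?case using insert by simp
qed

lemma Min_supermod:
  fixes SA SB T :: "real set"
  assumes "finite SA" "SA \<noteq> {}" "SA \<subseteq> SB" "finite SB" "finite T"
  shows "Min SA - Min (SA \<union> T) \<ge> Min SB - Min (SB \<union> T)"
proof (cases "T = {}")
  case True then show ?thesis by simp
next
  case False
  have sb: "SB \<noteq> {}" using assms by auto
  have ab: "Min SB \<le> Min SA" using assms Min_antimono by blast
  have "Min (SA \<union> T) = min (Min SA) (Min T)" using assms False by (simp add: Min_Un)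
  moreover have "Min (SB \<union> T) = min (Min SB) (Min T)" using assms False sb by (simp add: Min_Un)
  ultimately show ?thesis using ab by linarith
qed

theorem theorem1:
  fixes P :: "'a measure" and N M :: nat and C :: "nat \<Rightarrow> nat \<Rightarrow> 'a \<Rightarrow> real"
    and Asg :: "(nat \<times> nat) set"
  assumes "prob_space P"
    and "1 \<le> M" and "M \<le> N"
    and "\<And>i j. (i, j) \<in> edges N M \<Longrightarrow> integrable P (C i j)"
    and "valid_assignment N M Asg"
  shows "monotone_nonincreasing_on (edges N M - Asg) (J_O P M C Asg)
       \<and> supermodular_on (edges N M - Asg) (J_O P M C Asg)"
proof -
  have asg: "Asg \<subseteq> edges N M" using assms(5) unfolding valid_assignment_def by (rule conjunct1)
  have ex: "\<forall>j\<in>{1..M}. \<exists>!i. (i, j) \<in> Asg" using assms(5) unfolding valid_assignment_def by (elim conjE)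
  have fin: "\<And>E j. E \<subseteq> edges N M \<Longrightarrow> finite {k. (k,j)\<in>E}"
  proof -
    fix E j assume "E \<subseteq> edges N M"
    then have "{k. (k,j)\<in>E} \<subseteq> {1..N}" unfolding edges_def by auto
    then show "finite {k. (k,j)\<in>E}" by (rule finite_subset) simp
  qed
  have ne: "\<And>E j. Asg \<subseteq> E \<Longrightarrow> j \<in> {1..M} \<Longrightarrow> {k. (k,j)\<in>E} \<noteq> {}"
  proof -
    fix E j assume h: "Asg \<subseteq> E" "j \<in> {1..M}"
    obtain i where "(i, j) \<in> Asg" using ex h(2) by (meson ex1_implies_ex)
    then show "{k. (k,j)\<in>E} \<noteq> {}" using h(1) by blast
  qed
  have intg: "\<And>E j. E \<subseteq> edges N M \<Longrightarrow> Asg \<subseteq> E \<Longrightarrow> j \<in> {1..M} \<Longrightarrow> integrable P (eff_wait C E j)"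
  proof -
    fix E j assume h: "E \<subseteq> edges N M" "Asg \<subseteq> E" "j \<in> {1..M}"
    have "eff_wait C E j = (\<lambda>\<omega>. Min ((\<lambda>k. C k j \<omega>) ` {k. (k,j)\<in>E}))"
      unfolding eff_wait_def ew_set by simp
    moreover have "integrable P (\<lambda>\<omega>. Min ((\<lambda>k. C k j \<omega>) ` {k. (k,j)\<in>E}))"
      using fin[OF h(1)] ne[OF h(2,3)] h(1) assms(4)
      by (intro integrable_Min_img) auto
    ultimately show "integrable P (eff_wait C E j)" by simp
  qed
  have Mpos: "(0::real) \<le> 1 / real M" by simp
  have mono: "monotone_nonincreasing_on (edges N M - Asg) (J_O P M C Asg)"
    unfolding monotone_nonincreasing_on_def
  proof (intro allI impI)
    fix A B assume h: "A \<subseteq> B \<and> B \<subseteq> edges N M - Asg"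
    have s: "(\<Sum>j=1..M. integral\<^sup>L P (eff_wait C (B \<union> Asg) j)) \<le> (\<Sum>j=1..M. integral\<^sup>L P (eff_wait C (A \<union> Asg) j))"
    proof (rule sum_mono)
      fix j assume j: "j \<in> {1..M}"
      show "integral\<^sup>L P (eff_wait C (B \<union> Asg) j) \<le> integral\<^sup>L P (eff_wait C (A \<union> Asg) j)"
      proof (rule integral_mono)
        show "integrable P (eff_wait C (B \<union> Asg) j)" using h asg j by (intro intg) auto
        show "integrable P (eff_wait C (A \<union> Asg) j)" using h asg j by (intro intg) auto
        fix \<omega>
        have f: "finite {k. (k,j)\<in>B \<union> Asg}" using h asg by (intro fin) auto
        have n: "{k. (k,j)\<in>A \<union> Asg} \<noteq> {}" using j by (intro ne) auto
        show "eff_wait C (B \<union> Asg) j \<omega> \<le> eff_wait C (A \<union> Asg) j \<omega>"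
          unfolding eff_wait_def ew_set using f n h
          by (intro Min_antimono) auto
      qed
    qed
    show "J_O P M C Asg A \<ge> J_O P M C Asg B"
      unfolding J_O_def by (rule mult_left_mono[OF s Mpos])
  qed
  have sup: "supermodular_on (edges N M - Asg) (J_O P M C Asg)"
    unfolding supermodular_on_def
  proof (intro allI impI)
    fix A B x assume h: "A \<subseteq> B \<and> B \<subseteq> edges N M - Asg \<and> x \<in> edges N M - Asg - B"
    define d where "d = (\<lambda>E j. integral\<^sup>L P (eff_wait C (E \<union> Asg) j) - integral\<^sup>L P (eff_wait C (E \<union> {x} \<union> Asg) j))"
    have md: "\<And>E. marginal_decrease (J_O P M C Asg) x E = (1 / real M) * (\<Sum>j=1..M. d E j)"
      unfolding marginal_decrease_def J_O_def d_def by (simp add: sum_subtractf right_diff_distrib)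
    have s: "(\<Sum>j=1..M. d B j) \<le> (\<Sum>j=1..M. d A j)"
    proof (rule sum_mono)
      fix j assume j: "j \<in> {1..M}"
      have i1: "integrable P (eff_wait C (A \<union> Asg) j)" using h asg j by (intro intg) auto
      have i2: "integrable P (eff_wait C (A \<union> {x} \<union> Asg) j)" using h asg j by (intro intg) auto
      have i3: "integrable P (eff_wait C (B \<union> Asg) j)" using h asg j by (intro intg) auto
      have i4: "integrable P (eff_wait C (B \<union> {x} \<union> Asg) j)" using h asg j by (intro intg) auto
      have "integral\<^sup>L P (\<lambda>\<omega>. eff_wait C (B \<union> Asg) j \<omega> - eff_wait C (B \<union> {x} \<union> Asg) j \<omega>)
          \<le> integral\<^sup>L P (\<lambda>\<omega>. eff_wait C (A \<union> Asg) j \<omega> - eff_wait C (A \<union> {x} \<union> Asg) j \<omega>)"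
      proof (rule integral_mono)
        show "integrable P (\<lambda>\<omega>. eff_wait C (B \<union> Asg) j \<omega> - eff_wait C (B \<union> {x} \<union> Asg) j \<omega>)"
          using i3 i4 by simp
        show "integrable P (\<lambda>\<omega>. eff_wait C (A \<union> Asg) j \<omega> - eff_wait C (A \<union> {x} \<union> Asg) j \<omega>)"
          using i1 i2 by simp
        fix \<omega>
        let ?SA = "{C k j \<omega> | k. (k, j) \<in> A \<union> Asg}"
        let ?SB = "{C k j \<omega> | k. (k, j) \<in> B \<union> Asg}"
        let ?T = "{C k j \<omega> | k. (k, j) \<in> {x}}"
        have fA: "finite ?SA" unfolding ew_set using h asg by (intro finite_imageI fin) auto
        have fB: "finite ?SB" unfolding ew_set using h asg by (intro finite_imageI fin) auto
        have fT: "finite ?T" unfolding ew_set using h asg by (intro finite_imageI fin) auto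
        have "{k. (k, j) \<in> A \<union> Asg} \<noteq> {}" using j by (intro ne) auto
        then have nA: "?SA \<noteq> {}" unfolding ew_set by blast
        have sub: "?SA \<subseteq> ?SB" using h by blast
        have eA: "{C k j \<omega> | k. (k, j) \<in> A \<union> {x} \<union> Asg} = ?SA \<union> ?T" by blast
        have eB: "{C k j \<omega> | k. (k, j) \<in> B \<union> {x} \<union> Asg} = ?SB \<union> ?T" by blast
        show "eff_wait C (B \<union> Asg) j \<omega> - eff_wait C (B \<union> {x} \<union> Asg) j \<omega>
          \<le> eff_wait C (A \<union> Asg) j \<omega> - eff_wait C (A \<union> {x} \<union> Asg) j \<omega>"
          unfolding eff_wait_def eA eB using Min_supermod[OF fA nA sub fB fT] .
      qed
      then show "d B j \<le> d A j" unfolding d_def using i1 i2 i3 i4 by simp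
    qed
    show "marginal_decrease (J_O P M C Asg) x A \<ge> marginal_decrease (J_O P M C Asg) x B"
      unfolding md by (rule mult_left_mono[OF s Mpos])
  qed
  show ?thesis using mono sup by blast
qed

end
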